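(* For $n\ge2$ and all $P,Q\in\Gamma_n$, $D_{I\Delta}(P\|Q)\le \frac23 D_{h\Delta}(P\|Q)$.
   Context: $\Gamma_n=\{P=(p_1,\dots,p_n): p_i>0,\ \sum p_i=1\}$. $h(P\|Q)=\frac12\sum_{i=1}^n(\sqrt{p_i}-\sqrt{q_i})^2$; $\Delta(P\|Q)=\sum_{i=1}^n\frac{(p_i-q_i)^2}{p_i+q_i}$; $I(P\|Q)=\frac12\Big[\sum_{i=1}^n p_i\ln\frac{2p_i}{p_i+q_i}+\sum_{i=1}^n q_i\ln\frac{2q_i}{p_i+q_i}\Big]$. $D_{I\Delta}=I-\frac14\Delta$, $D_{h\Delta}=h-\frac14\Delta$. *)

theory Defs
  imports Complex_Main
begin

definition Gamma :: "nat \<Rightarrow> (nat \<Rightarrow> real) set" where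
  "Gamma n = {p. (\<forall>i<n. p i > 0) \<and> (\<Sum>i<n. p i) = 1}"

definition hellinger :: "nat \<Rightarrow> (nat \<Rightarrow> real) \<Rightarrow> (nat \<Rightarrow> real) \<Rightarrow> real" where
  "hellinger n p q = (1/2) * (\<Sum>i<n. (sqrt (p i) - sqrt (q i))^2)"

definition triangular :: "nat \<Rightarrow> (nat \<Rightarrow> real) \<Rightarrow> (nat \<Rightarrow> real) \<Rightarrow> real" where
  "triangular n p q = (\<Sum>i<n. (p i - q i)^2 / (p i + q i))"

definition jsdiv :: "nat \<Rightarrow> (nat \<Rightarrow> real) \<Rightarrow> (nat \<Rightarrow> real) \<Rightarrow> real" where
  "jsdiv n p q = (1/2) * ((\<Sum>i<n. p i * ln (2 * p i / (p i + q i)))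
                        + (\<Sum>i<n. q i * ln (2 * q i / (p i + q i))))"

definition D_I_Delta :: "nat \<Rightarrow> (nat \<Rightarrow> real) \<Rightarrow> (nat \<Rightarrow> real) \<Rightarrow> real" where
  "D_I_Delta n p q = jsdiv n p q - (1/4) * triangular n p q"

definition D_h_Delta :: "nat \<Rightarrow> (nat \<Rightarrow> real) \<Rightarrow> (nat \<Rightarrow> real) \<Rightarrow> real" where
  "D_h_Delta n p q = hellinger n p q - (1/4) * triangular n p q"

end

theory Submission
  imports Defs
begin


lemma Gder_nonneg:
  fixes t :: real assumes "0 \<le> t" "t < 1"
  shows "(2/3)*(1/sqrt(1-t^2) - 1) + (2/3)*t*(t/(sqrt(1-t^2))^3) + 1 - (1/(1+t) + 1/(1-t))/2 \<ge> 0"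
proof -
  define s where "s = sqrt (1-t^2)"
  have t2: "t^2 < 1" using assms by (simp add: abs_square_less_1)
  have s0: "s > 0" and s1: "s \<le> 1" using t2 by (auto simp: s_def)
  have ss: "s^2 = 1 - t^2" using t2 by (simp add: s_def)
  have e: "(1/(1+t) + 1/(1-t))/2 = 1/s^2" proof -
    have "1 - t*t \<noteq> 0" "1+t \<noteq> 0" "1-t\<noteq>0" using t2 assms by (auto simp: power2_eq_square)
    then show ?thesis unfolding ss by (simp add: field_simps power2_eq_square)
  qed
  have tt: "(2/3)*t*(t/s^3) = (2/3)*(1-s^2)/s^3" using ss by (simp add: power2_eq_square)
  have "(2/3)*(1/s - 1) + (2/3)*t*(t/s^3) + 1 - 1/s^2 = ((s-1)^2*(s+2)/3) / s^3"
    unfolding tt using s0 by (simp add: field_simps) (simp add: power_numeral_reduce algebra_simps)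
  also have "\<dots> \<ge> 0" using s0 by simp
  finally show ?thesis using e by (simp add: s_def)
qed

definition GG :: "real \<Rightarrow> real" where
  "GG t = (2/3)*t*(1/sqrt(1-t^2) - 1) + t - (ln(1+t) - ln(1-t))/2"

lemma GG_nonneg: assumes "0 \<le> t" "t < 1" shows "GG t \<ge> 0"
proof -
  have "GG 0 \<le> GG t"
  proof (rule DERIV_nonneg_imp_nondecreasing[OF assms(1)])
    fix x :: real assume x: "0 \<le> x" "x \<le> t"
    have x2: "x^2 < 1" using x assms by (simp add: abs_square_less_1)
    have "DERIV GG x :> (2/3)*(1/sqrt(1-x^2) - 1) + (2/3)*x*(x/(sqrt(1-x^2))^3) + 1 - (1/(1+x) + 1/(1-x))/2"
      unfolding GG_def
      using x x2 assms
      apply -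
      apply (rule derivative_eq_intros refl | simp)+
    proof -
      have sq: "sqrt(1-x^2)^2 = 1 - x^2" using x2 by simp
      have sp: "sqrt(1-x^2) > 0" using x2 by simp
      have "3 - x^2*3 = 3*sqrt(1-x^2)^2" using sq by simp
      then show "inverse (sqrt (1 - x\<^sup>2)) * x * (2 * x) / (3 - x\<^sup>2 * 3) -
        (2 / (1 + x) + 2 / (1 - x)) / 4 =
        2 * x * x / (3 * sqrt (1 - x\<^sup>2) ^ 3) - (1 / (1 + x) + 1 / (1 - x)) / 2"
        using sp by (simp add: field_simps power2_eq_square power3_eq_cube)
    qed
    then show "\<exists>y. DERIV GG x :> y \<and> y \<ge> 0" using Gder_nonneg[of x] x assms by auto
  qed
  then show ?thesis by (simp add: GG_def)
qed
definition FF :: "real \<Rightarrow> real" where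
  "FF t = (2/3)*(1 - sqrt(1-t^2) - t^2/2) - ((1+t)*ln(1+t) + (1-t)*ln(1-t))/2 + t^2/2"

lemma FF_nonneg_pos: assumes "0 \<le> t" "t < 1" shows "FF t \<ge> 0"
proof -
  have "FF 0 \<le> FF t"
  proof (rule DERIV_nonneg_imp_nondecreasing[OF assms(1)])
    fix x :: real assume x: "0 \<le> x" "x \<le> t"
    have x2: "x^2 < 1" using x assms by (simp add: abs_square_less_1)
    have "DERIV FF x :> GG x"
      unfolding FF_def GG_def
      using x x2 assms
      apply -
      apply (rule derivative_eq_intros refl | simp)+
      apply (simp add: field_simps)
      done
    then show "\<exists>y. DERIV FF x :> y \<and> y \<ge> 0" using GG_nonneg[of x] x assms by auto
  qed
  then show ?thesis by (simp add: FF_def)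
qed

lemma FF_nonneg: assumes "\<bar>t\<bar> < 1" shows "FF t \<ge> 0"
proof (cases "t \<ge> 0")
  case True then show ?thesis using FF_nonneg_pos assms by auto
next
  case False
  have "FF t = FF (-t)" by (simp add: FF_def)
  then show ?thesis using FF_nonneg_pos[of "-t"] False assms by auto
qed

lemma pointwise:
  fixes p q :: real assumes p: "p > 0" and q: "q > 0"
  shows "(1/2)*(p*ln(2*p/(p+q)) + q*ln(2*q/(p+q))) - (1/4)*((p-q)^2/(p+q))
     \<le> (2/3)*((1/2)*(sqrt p - sqrt q)^2 - (1/4)*((p-q)^2/(p+q)))"
proof -
  define c where "c = (p+q)/2"
  define t where "t = (p-q)/(p+q)"
  have c0: "c > 0" using p q by (simp add: c_def)
  have pc: "p = c*(1+t)" and qc: "q = c*(1-t)" using p q by (simp_all add: c_def t_def field_simps)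
  have tb: "\<bar>t\<bar> < 1" using p q by (simp add: t_def abs_less_iff field_simps)
  have a1: "2*p/(p+q) = 1+t" and a2: "2*q/(p+q) = 1-t" using p q by (simp_all add: t_def field_simps)
  have "sqrt p * sqrt q = sqrt (c^2 * (1-t^2))"
    by (simp add: real_sqrt_mult[symmetric] pc qc power2_eq_square algebra_simps)
  also have "\<dots> = c * sqrt(1-t^2)" using c0 by (simp add: real_sqrt_mult)
  finally have sq: "sqrt p * sqrt q = c * sqrt(1-t^2)" .
  have h: "(sqrt p - sqrt q)^2 = p + q - 2*(sqrt p * sqrt q)"
    using p q by (simp add: power2_eq_square algebra_simps)
  have d: "(p-q)^2/(p+q) = 2*c*t^2" using c0 by (simp add: pc qc field_simps power2_eq_square)
  have "(2/3)*((1/2)*(sqrt p - sqrt q)^2 - (1/4)*((p-q)^2/(p+q)))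
     - ((1/2)*(p*ln(2*p/(p+q)) + q*ln(2*q/(p+q))) - (1/4)*((p-q)^2/(p+q))) = c * FF t"
    unfolding h sq d a1 a2 FF_def by (simp add: pc qc algebra_simps) (simp add: field_simps)
  moreover have "c * FF t \<ge> 0" using c0 FF_nonneg[OF tb] by simp
  ultimately show ?thesis by linarith
qed


theorem proposition5p1:
  fixes n :: nat and P Q :: "nat \<Rightarrow> real"
  assumes "n \<ge> 2" and "P \<in> Gamma n" and "Q \<in> Gamma n"
  shows "D_I_Delta n P Q \<le> (2/3) * D_h_Delta n P Q"
proof -
  have pos: "\<And>i. i < n \<Longrightarrow> P i > 0 \<and> Q i > 0" using assms(2,3) by (auto simp: Gamma_def)
  have "(\<Sum>i<n. (1/2)*(P i*ln(2*P i/(P i+Q i)) + Q i*ln(2*Q i/(P i+Q i))) - (1/4)*((P i-Q i)^2/(P i+Q i)))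
     \<le> (\<Sum>i<n. (2/3)*((1/2)*(sqrt (P i) - sqrt (Q i))^2 - (1/4)*((P i-Q i)^2/(P i+Q i))))"
    by (rule sum_mono) (use pos pointwise in auto)
  then show ?thesis
    unfolding D_I_Delta_def D_h_Delta_def jsdiv_def hellinger_def triangular_def
    by (simp add: sum_subtractf sum.distrib sum_distrib_left algebra_simps)
qed

end
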